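(* There is no left commutative T2R semigroup, i.e. no T2R semigroup satisfies the identity $xya=yxa$ for all $x,y,a$.
   Context: A semigroup $S$ is a $\Delta$-semigroup if the lattice of all congruences of $S$ is a chain with respect to inclusion. A semigroup $N$ with zero $0$ is nil if every element has some power equal to $0$; non-trivial means having more than one element. A T2R semigroup is a $\Delta$-semigroup $S$ which is the disjoint union of a non-trivial nil ideal $S_0$ (with zero $0$, which is then the zero of $S$) and a subsemigroup $S_1=\{u,v\}$, $u\neq v$, which is a right zero semigroup ($xy=y$ for $x,y\in S_1$). *)

theory Defs
  imports Main
begin

definition semigroup_on :: "'a set \<Rightarrow> ('a \<Rightarrow> 'a \<Rightarrow> 'a) \<Rightarrow> bool" where
  "semigroup_on S f \<longleftrightarrow>
     (\<forall>x\<in>S. \<forall>y\<in>S. f x y \<in> S) \<and>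
     (\<forall>x\<in>S. \<forall>y\<in>S. \<forall>z\<in>S. f (f x y) z = f x (f y z))"

definition congruence_on :: "'a set \<Rightarrow> ('a \<Rightarrow> 'a \<Rightarrow> 'a) \<Rightarrow> 'a rel \<Rightarrow> bool" where
  "congruence_on S f R \<longleftrightarrow>
     equiv S R \<and>
     (\<forall>a b c. (a, b) \<in> R \<longrightarrow> c \<in> S \<longrightarrow> (f c a, f c b) \<in> R \<and> (f a c, f b c) \<in> R)"

definition delta_semigroup :: "'a set \<Rightarrow> ('a \<Rightarrow> 'a \<Rightarrow> 'a) \<Rightarrow> bool" where
  "delta_semigroup S f \<longleftrightarrow>
     semigroup_on S f \<and>
     (\<forall>R1 R2. congruence_on S f R1 \<longrightarrow> congruence_on S f R2 \<longrightarrow> R1 \<subseteq> R2 \<or> R2 \<subseteq> R1)"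

text \<open>Positive powers: spow f x n = x^(n+1).\<close>

primrec spow :: "('a \<Rightarrow> 'a \<Rightarrow> 'a) \<Rightarrow> 'a \<Rightarrow> nat \<Rightarrow> 'a" where
  "spow f x 0 = x"
| "spow f x (Suc n) = f (spow f x n) x"

definition nontrivial_nil_ideal :: "'a set \<Rightarrow> ('a \<Rightarrow> 'a \<Rightarrow> 'a) \<Rightarrow> 'a set \<Rightarrow> 'a \<Rightarrow> bool" where
  "nontrivial_nil_ideal S f N z \<longleftrightarrow>
     N \<subseteq> S \<and>
     (\<forall>x\<in>S. \<forall>y\<in>N. f x y \<in> N \<and> f y x \<in> N) \<and>
     z \<in> N \<and> (\<forall>x\<in>N. f z x = z \<and> f x z = z) \<and>
     (\<forall>x\<in>N. \<exists>n. spow f x n = z) \<and>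
     (\<exists>a\<in>N. \<exists>b\<in>N. a \<noteq> b)"

definition T2R :: "'a set \<Rightarrow> ('a \<Rightarrow> 'a \<Rightarrow> 'a) \<Rightarrow> bool" where
  "T2R S f \<longleftrightarrow>
     delta_semigroup S f \<and>
     (\<exists>N z u v. nontrivial_nil_ideal S f N z \<and>
        u \<noteq> v \<and> S = N \<union> {u, v} \<and> u \<notin> N \<and> v \<notin> N \<and>
        f u u = u \<and> f u v = v \<and> f v u = u \<and> f v v = v)"

end

theory Submission
  imports Defs
begin

theorem mainTheorem10:
  fixes S :: "'a set" and f :: "'a \<Rightarrow> 'a \<Rightarrow> 'a"
  assumes "T2R S f"
  shows "\<not> (\<forall>x\<in>S. \<forall>y\<in>S. \<forall>a\<in>S. f (f x y) a = f (f y x) a)"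
proof
  assume LC: "\<forall>x\<in>S. \<forall>y\<in>S. \<forall>a\<in>S. f (f x y) a = f (f y x) a"
  from assms obtain N z u v where D: "delta_semigroup S f" and NI: "nontrivial_nil_ideal S f N z"
    and uv: "u \<noteq> v" "S = N \<union> {u, v}" "u \<notin> N" "v \<notin> N"
    "f u u = u" "f u v = v" "f v u = u" "f v v = v"
    unfolding T2R_def by blast
  have cl: "\<And>x y. x \<in> S \<Longrightarrow> y \<in> S \<Longrightarrow> f x y \<in> S" and
    as: "\<And>x y w. x \<in> S \<Longrightarrow> y \<in> S \<Longrightarrow> w \<in> S \<Longrightarrow> f (f x y) w = f x (f y w)"
    using D unfolding delta_semigroup_def semigroup_on_def by blast+
  have ch: "\<And>R1 R2. congruence_on S f R1 \<Longrightarrow> congruence_on S f R2 \<Longrightarrow> R1 \<subseteq> R2 \<or> R2 \<subseteq> R1"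
    using D unfolding delta_semigroup_def by blast
  have NS: "N \<subseteq> S" and Nid: "\<And>x y. x \<in> S \<Longrightarrow> y \<in> N \<Longrightarrow> f x y \<in> N \<and> f y x \<in> N"
    and zN: "z \<in> N" and zz: "\<And>x. x \<in> N \<Longrightarrow> f z x = z \<and> f x z = z"
    and nt: "\<exists>a\<in>N. \<exists>b\<in>N. a \<noteq> b"
    using NI unfolding nontrivial_nil_ideal_def by blast+
  have uS: "u \<in> S" "v \<in> S" using uv by auto
  have uva: "\<And>a. a \<in> S \<Longrightarrow> f u a = f v a"
    using LC uS uv by metis
  have zs: "\<And>s. s \<in> S \<Longrightarrow> f z s = z"
  proof -
    fix s assume s: "s \<in> S"
    have "f z s \<in> N" using Nid s zN by blast
    hence "f z (f z s) = z" using zz by blast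
    moreover have "f z (f z s) = f (f z z) s" using as zN NS s by auto
    moreover have "f z z = z" using zz zN by blast
    ultimately show "f z s = z" by simp
  qed
  define R0 where "R0 = Id_on S \<union> N \<times> N"
  define Rho where "Rho = {(x,y). x\<in>S \<and> y\<in>S \<and> (\<forall>s\<in>S. f x s = f y s)}"
  have c0: "congruence_on S f R0"
    unfolding congruence_on_def equiv_def refl_on_def sym_def trans_def
  proof (intro conjI allI impI)
    fix a b c assume ab: "(a, b) \<in> R0" and c: "c \<in> S"
    show "(f c a, f c b) \<in> R0" using ab c cl Nid NS unfolding R0_def by auto
    show "(f a c, f b c) \<in> R0" using ab c cl Nid NS unfolding R0_def by auto
  qed (use NS in \<open>auto simp: R0_def\<close>)
  have c1: "congruence_on S f Rho"
    unfolding congruence_on_def equiv_def refl_on_def sym_def trans_def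
  proof (intro conjI allI impI)
    fix a b c assume ab: "(a, b) \<in> Rho" and c: "c \<in> S"
    show "(f c a, f c b) \<in> Rho" using ab c cl as unfolding Rho_def by auto
    show "(f a c, f b c) \<in> Rho" using ab c cl as unfolding Rho_def by auto
  qed (auto simp: Rho_def)
  have "(u, v) \<in> Rho" using uS uva unfolding Rho_def by auto
  moreover have "(u, v) \<notin> R0" using uv unfolding R0_def by auto
  ultimately have "R0 \<subseteq> Rho" using ch[OF c0 c1] by blast
  hence Nz: "\<And>c s. c \<in> N \<Longrightarrow> s \<in> S \<Longrightarrow> f c s = z"
  proof -
    fix c s assume c: "c \<in> N" and s: "s \<in> S"
    have "(c, z) \<in> R0" using c zN unfolding R0_def by auto
    hence "(c, z) \<in> Rho" using \<open>R0 \<subseteq> Rho\<close> by blast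
    hence "f c s = f z s" using s unfolding Rho_def by auto
    thus "f c s = z" using zs s by simp
  qed
  define Sg where "Sg = Id_on S \<union> {u,v} \<times> {u,v}"
  have c2: "congruence_on S f Sg"
    unfolding congruence_on_def equiv_def refl_on_def sym_def trans_def
  proof (intro conjI allI impI)
    fix a b c assume ab: "(a, b) \<in> Sg" and c: "c \<in> S"
    show "(f c a, f c b) \<in> Sg"
    proof (cases "a = b")
      case True thus ?thesis using ab c cl uS unfolding Sg_def by auto
    next
      case False
      hence ab2: "a \<in> {u,v}" "b \<in> {u,v}" using ab unfolding Sg_def by auto
      show ?thesis
      proof (cases "c \<in> N")
        case True thus ?thesis using Nz ab2 uS zN NS unfolding Sg_def by auto
      next
        case False
        hence "c = u \<or> c = v" using c uv by auto
        thus ?thesis using ab2 uv uS unfolding Sg_def by auto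
      qed
    qed
    show "(f a c, f b c) \<in> Sg"
    proof (cases "a = b")
      case True thus ?thesis using ab c cl uS unfolding Sg_def by auto
    next
      case False
      hence ab2: "a \<in> {u,v}" "b \<in> {u,v}" using ab unfolding Sg_def by auto
      thus ?thesis using uva c cl uS unfolding Sg_def by auto
    qed
  qed (auto simp: Sg_def uS)
  from nt obtain a b where "a \<in> N" "b \<in> N" "a \<noteq> b" by blast
  hence "(a,b) \<in> R0" "(a,b) \<notin> Sg" using uv unfolding R0_def Sg_def by auto
  moreover have "(u,v) \<in> Sg" "(u,v) \<notin> R0" using uv uS unfolding R0_def Sg_def by auto
  ultimately show False using ch[OF c0 c2] by blast
qed

end
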